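(* Let $R=(g(x),f(x))$ be a Riordan matrix with positive main diagonal entries, and let $I$ be the infinite identity matrix. Then $R+I$ is a Riordan matrix if and only if $f(x)=x$.
   Context: A Riordan matrix $(g(x),f(x))$, with formal power series $g(x)=g_0+g_1x+\cdots$, $g_0\ne0$, and $f(x)=f_1x+f_2x^2+\cdots$, $f_1\ne0$, is the infinite lower triangular matrix (indices $0,1,2,\ldots$) whose $j$-th column has generating function $g(x)f(x)^j$; its main diagonal entries are $g_0f_1^j$. *)

theory Defs
  imports "HOL-Computational_Algebra.Formal_Power_Series"
begin

text \<open>Riordan matrices over the reals, represented as infinite lower triangular
  matrices, i.e. functions from row index and column index (both starting at 0)
  to entries.\<close>

definition riordan_matrix :: "real fps \<Rightarrow> real fps \<Rightarrow> nat \<Rightarrow> nat \<Rightarrow> real" where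
  "riordan_matrix g f = (\<lambda>i j. fps_nth (g * f ^ j) i)"

definition riordan_pair :: "real fps \<Rightarrow> real fps \<Rightarrow> bool" where
  "riordan_pair g f \<longleftrightarrow> fps_nth g 0 \<noteq> 0 \<and> fps_nth f 0 = 0 \<and> fps_nth f 1 \<noteq> 0"

definition is_riordan :: "(nat \<Rightarrow> nat \<Rightarrow> real) \<Rightarrow> bool" where
  "is_riordan M \<longleftrightarrow> (\<exists>g f. riordan_pair g f \<and> M = riordan_matrix g f)"

definition identity_matrix :: "nat \<Rightarrow> nat \<Rightarrow> real" where
  "identity_matrix = (\<lambda>i j. if i = j then 1 else 0)"

end

theory Submission
  imports Defs
begin

lemma key:
  fixes g f :: "real fps"
  assumes g: "g \<noteq> 0"
    and e: "(g * f + fps_X)^2 = (g + 1) * (g * f^2 + fps_X^2)"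
  shows "f = fps_X"
proof -
  have "g * (f - fps_X)^2 = 0"
    using e by (simp add: power2_eq_square algebra_simps)
  hence "(f - fps_X)^2 = 0" using g by simp
  thus ?thesis by simp
qed

theorem lemma5p2:
  fixes g f :: "real fps"
  assumes "riordan_pair g f"
    and "\<forall>j. riordan_matrix g f j j > 0"
  shows "is_riordan (\<lambda>i j. riordan_matrix g f i j + identity_matrix i j) \<longleftrightarrow> f = fps_X"
proof
  assume "is_riordan (\<lambda>i j. riordan_matrix g f i j + identity_matrix i j)"
  then obtain h k where hk: "(\<lambda>i j. riordan_matrix g f i j + identity_matrix i j) = riordan_matrix h k"
    unfolding is_riordan_def by blast
  have col: "h * k^j = g * f^j + fps_X^j" for j
  proof (rule fps_ext)
    fix i
    have "riordan_matrix g f i j + identity_matrix i j = riordan_matrix h k i j"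
      using hk by metis
    thus "fps_nth (h * k^j) i = fps_nth (g * f^j + fps_X^j) i"
      by (simp add: riordan_matrix_def identity_matrix_def fps_X_power_iff eq_commute)
  qed
  have h: "h = g + 1" using col[of 0] by simp
  have c1: "h * k = g * f + fps_X" using col[of 1] by simp
  have c2: "h * k^2 = g * f^2 + fps_X^2" using col[of 2] .
  have "(g * f + fps_X)^2 = h * (h * k^2)"
  proof -
    have "(g * f + fps_X)^2 = (h*k)*(h*k)" by (simp add: c1 power2_eq_square)
    thus ?thesis by (simp add: power2_eq_square algebra_simps)
  qed
  hence e: "(g * f + fps_X)^2 = (g + 1) * (g * f^2 + fps_X^2)" using c2 h by simp
  have "g \<noteq> 0" using assms(1) unfolding riordan_pair_def by auto
  thus "f = fps_X" using key e by blast
next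
  assume f: "f = fps_X"
  have g0: "fps_nth g 0 > 0" using assms(2)[rule_format, of 0] by (simp add: riordan_matrix_def)
  have "riordan_pair (g + 1) fps_X" using g0 by (simp add: riordan_pair_def)
  moreover have "(\<lambda>i j. riordan_matrix g f i j + identity_matrix i j) = riordan_matrix (g + 1) fps_X"
    by (auto simp: f riordan_matrix_def identity_matrix_def distrib_right fps_X_power_iff)
  ultimately show "is_riordan (\<lambda>i j. riordan_matrix g f i j + identity_matrix i j)"
    unfolding is_riordan_def by blast
qed

end
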